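(* Let $\xi\ge 1$ be a real constant, let $e_b>0$, and let $\mathcal A\subseteq[0,e_b]$ be the range of admissible values of a parameter $a$. For $a\in\mathcal A$ consider the initial triple $(p_X,p_Y,p_Z)=(e_b-a,\;a,\;\xi e_b-a)$. Fix a finite sequence of B steps and P steps whose first step is a B step, and let $(p_X',p_Y',p_Z')$ be the triple obtained by applying this sequence to the initial triple. Define the key generation rate $$R(a)=1-H_2(p_X'+p_Y')-H_2(p_Z'+p_Y').$$ Suppose (i) $e_b<\frac{1+4a}{2(1+\xi)}$ for all $a\in\mathcal A$, and (ii) $e_b<\frac{1}{2\xi}$. Then, for fixed $e_b$ and fixed sequence, $R(a)$ is an increasing function of $a$ on $\mathcal A$.
   Context: $H_2(p)=-p\log_2 p-(1-p)\log_2(1-p)$ is the binary entropy. A B step maps a triple $(p_X,p_Y,p_Z)$ to $(p_X',p_Y',p_Z')$ with $p_X'=(p_X^2+p_Y^2)/p_S$, $p_Y'=2p_Xp_Y/p_S$, $p_Z'=2(1-p_X-p_Y-p_Z)p_Z/p_S$, where $p_S=1-2(p_X+p_Y)(1-p_X-p_Y)$. A P step maps $(p_X,p_Y,p_Z)$, with $p_I=1-p_X-p_Y-p_Z$, to $p_X'=3p_I^2(p_X+p_Y)+6p_Ip_Xp_Z+3p_X^2p_Y+p_X^3$, $p_Y'=6p_Ip_Yp_Z+3p_X(p_Y^2+p_Z^2)+3p_Yp_Z^2+p_Y^3$, $p_Z'=3p_I(p_Y^2+p_Z^2)+6p_Xp_Yp_Z+3p_Y^2p_Z+p_Z^3$.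 (Here $p_X,p_Y,p_Z$ are the probabilities of bit-flip, bit-and-phase-flip, and phase-flip errors of noisy EPR pairs.) *)

theory Defs
  imports Complex_Main
begin

definition H2 :: "real \<Rightarrow> real" where
  "H2 p = - p * log 2 p - (1 - p) * log 2 (1 - p)"

datatype step = BStep | PStep

definition B_step :: "real \<times> real \<times> real \<Rightarrow> real \<times> real \<times> real" where
  "B_step t = (case t of (pX, pY, pZ) \<Rightarrow>
     (let pS = 1 - 2 * (pX + pY) * (1 - pX - pY)
      in ((pX^2 + pY^2) / pS, 2 * pX * pY / pS, 2 * (1 - pX - pY - pZ) * pZ / pS)))"

definition P_step :: "real \<times> real \<times> real \<Rightarrow> real \<times> real \<times> real" where
  "P_step t = (case t of (pX, pY, pZ) \<Rightarrow>
     (let pI = 1 - pX - pY - pZ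
      in (3 * pI^2 * (pX + pY) + 6 * pI * pX * pZ + 3 * pX^2 * pY + pX^3,
          6 * pI * pY * pZ + 3 * pX * (pY^2 + pZ^2) + 3 * pY * pZ^2 + pY^3,
          3 * pI * (pY^2 + pZ^2) + 6 * pX * pY * pZ + 3 * pY^2 * pZ + pZ^3)))"

definition apply_step :: "step \<Rightarrow> real \<times> real \<times> real \<Rightarrow> real \<times> real \<times> real" where
  "apply_step s = (case s of BStep \<Rightarrow> B_step | PStep \<Rightarrow> P_step)"

definition apply_steps :: "step list \<Rightarrow> real \<times> real \<times> real \<Rightarrow> real \<times> real \<times> real" where
  "apply_steps ss t = fold apply_step ss t"

definition key_rate :: "real \<Rightarrow> real \<Rightarrow> step list \<Rightarrow> real \<Rightarrow> real" where
  "key_rate \<xi> eb ss a = (case apply_steps ss (eb - a, a, \<xi> * eb - a) of (pX', pY', pZ') \<Rightarrow>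
      1 - H2 (pX' + pY') - H2 (pZ' + pY'))"

end

theory Submission
  imports Defs
begin

definition cmap :: "real \<times> real \<times> real \<Rightarrow> real \<times> real \<times> real" where
  "cmap t = (case t of (x, y, z) \<Rightarrow> (1 - 2*(y+z), 1 - 2*(x+z), 1 - 2*(x+y)))"

definition Bc :: "real \<times> real \<times> real \<Rightarrow> real \<times> real \<times> real" where
  "Bc t = (case t of (cx, cy, cz) \<Rightarrow>
     ((cx^2 + cy^2)/(1+cz^2), 2*cx*cy/(1+cz^2), 2*cz/(1+cz^2)))"

definition Pc :: "real \<times> real \<times> real \<Rightarrow> real \<times> real \<times> real" where
  "Pc t = (case t of (cx, cy, cz) \<Rightarrow>
     (cx*(3 - cx^2)/2, cy*(3*cz^2 - cy^2)/2, cz^3))"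

definition apply_c :: "step \<Rightarrow> real \<times> real \<times> real \<Rightarrow> real \<times> real \<times> real" where
  "apply_c s = (case s of BStep \<Rightarrow> Bc | PStep \<Rightarrow> Pc)"

lemma aux_frac: "(S::real) \<noteq> 0 \<Longrightarrow> 2*S - 4*(A+B) = N \<Longrightarrow> 1 - 2*(A/S + B/S) = N/(2*S)"
proof -
  assume S: "S \<noteq> 0" and N: "2*S - 4*(A+B) = N"
  have "N/(2*S) = (2*S - 4*(A+B))/(2*S)" using N by simp
  also have "\<dots> = 1 - 2*(A/S + B/S)" using S by (simp add: diff_divide_distrib add_divide_distrib)
  finally show ?thesis by simp
qed

lemma cmap_B: "cmap (B_step t) = Bc (cmap t)"
proof -
  obtain x y z where t: "t = (x, y, z)" by (cases t) auto
  define S where "S = 1 - 2 * (x + y) * (1 - x - y)"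
  have D: "1 + (1 - 2*(x+y))^2 = 2*S" unfolding S_def by (simp add: power2_eq_square algebra_simps)
  have "0 < 1 + (1 - 2*(x+y))^2" by (simp add: add_pos_nonneg)
  then have Sp: "S \<noteq> 0" using D by linarith
  have e1: "1 - 2 * (2*x*y/S + 2*(1-x-y-z)*z/S) = ((1 - 2*(y+z))^2 + (1 - 2*(x+z))^2) / (2*S)"
    by (rule aux_frac[OF Sp]) (simp add: S_def power2_eq_square algebra_simps)
  have e2: "1 - 2 * ((x^2+y^2)/S + 2*(1-x-y-z)*z/S) = 2*(1 - 2*(y+z))*(1 - 2*(x+z)) / (2*S)"
    by (rule aux_frac[OF Sp]) (simp add: S_def power2_eq_square algebra_simps)
  have e3: "1 - 2 * ((x^2+y^2)/S + 2*x*y/S) = 2*(1 - 2*(x+y)) / (2*S)"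
    by (rule aux_frac[OF Sp]) (simp add: S_def power2_eq_square algebra_simps)
  have B: "B_step t = ((x^2+y^2)/S, 2*x*y/S, 2*(1-x-y-z)*z/S)"
    by (simp add: t B_step_def S_def Let_def)
  show ?thesis unfolding B unfolding t cmap_def Bc_def prod.case D
    by (simp only: e1 e2 e3)
qed

lemma cmap_P: "cmap (P_step t) = Pc (cmap t)"
proof -
  obtain x y z where t: "t = (x, y, z)" by (cases t) auto
  show ?thesis unfolding t cmap_def P_step_def Pc_def Let_def
    by (simp add: power2_eq_square power3_eq_cube algebra_simps)
qed

lemma cmap_step: "cmap (apply_step s t) = apply_c s (cmap t)"
  by (cases s) (simp_all add: apply_step_def apply_c_def cmap_B cmap_P)

lemma cmap_fold: "cmap (fold apply_step ss t) = fold apply_c ss (cmap t)"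
  by (induction ss arbitrary: t) (simp_all add: cmap_step)


lemma key_rate_c:
  "key_rate \<xi> eb ss a = (case fold apply_c ss (cmap (eb - a, a, \<xi> * eb - a)) of (cx, cy, cz) \<Rightarrow>
      1 - H2 ((1 - cz)/2) - H2 ((1 - cx)/2))"
proof -
  obtain x y z where r: "apply_steps ss (eb - a, a, \<xi> * eb - a) = (x, y, z)"
    by (cases "apply_steps ss (eb - a, a, \<xi> * eb - a)") auto
  have "fold apply_c ss (cmap (eb - a, a, \<xi> * eb - a)) = cmap (x, y, z)"
    using r by (simp add: cmap_fold[symmetric] apply_steps_def)
  then show ?thesis using r by (simp add: key_rate_def cmap_def add_divide_distrib add.commute)
qed

definition Inv :: "real \<times> real \<times> real \<Rightarrow> real \<times> real \<times> real \<Rightarrow> bool" where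
  "Inv c1 c2 = (case c1 of (x1, y1, z1) \<Rightarrow> case c2 of (x2, y2, z2) \<Rightarrow>
     z1 = z2 \<and> 0 < z1 \<and> z1 \<le> 1 \<and> 0 < x1 \<and> x1 < x2 \<and> x2 \<le> 1 \<and> 0 < y1 \<and> y1 \<le> y2 \<and> y2 \<le> z1)"

lemma Bc_inv: assumes "Inv c1 c2" shows "Inv (Bc c1) (Bc c2)"
proof -
  obtain x1 y1 z where c1: "c1 = (x1, y1, z)" by (cases c1) auto
  obtain x2 y2 z2 where c2: "c2 = (x2, y2, z2)" by (cases c2) auto
  from assms have h: "z2 = z" "0 < z" "z \<le> 1" "0 < x1" "x1 < x2" "x2 \<le> 1" "0 < y1" "y1 \<le> y2" "y2 \<le> z"
    by (auto simp: Inv_def c1 c2)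
  define D where "D = 1 + z^2"
  have Dp: "D > 0" unfolding D_def by (simp add: add_pos_nonneg)
  have a1: "0 < 2*z/D" using Dp h by simp
  have "0 \<le> (1-z)^2" by simp
  moreover have "(1-z)^2 = D - 2*z" unfolding D_def by (simp add: power2_eq_square algebra_simps)
  ultimately have "2*z \<le> D" by linarith
  then have a2: "2*z/D \<le> 1" using Dp by (simp add: divide_le_eq)
  have a3: "0 < (x1^2+y1^2)/D" using Dp h by (simp add: add_pos_pos)
  have "x1^2 < x2^2" using h by (simp add: power_strict_mono)
  moreover have "y1^2 \<le> y2^2" using h by (simp add: power_mono)
  ultimately have a4: "(x1^2+y1^2)/D < (x2^2+y2^2)/D" using Dp by (simp add: divide_strict_right_mono)
  have "x2^2 \<le> 1" using h by (simp add: power_le_one)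
  moreover have "y2^2 \<le> z^2" using h by (simp add: power_mono)
  ultimately have a5: "(x2^2+y2^2)/D \<le> 1" using Dp unfolding D_def by simp
  have a6: "0 < 2*x1*y1/D" using Dp h by simp
  have "x1*y1 \<le> x2*y2" using h by (simp add: mult_mono)
  then have a7: "2*x1*y1/D \<le> 2*x2*y2/D" using Dp by (simp add: divide_right_mono)
  have "x2*y2 \<le> 1*z" using h by (intro mult_mono) auto
  then have a8: "2*x2*y2/D \<le> 2*z/D" using Dp by (simp add: divide_right_mono)
  show ?thesis unfolding c1 c2 h(1) Inv_def Bc_def D_def[symmetric] prod.case
    using a1 a2 a3 a4 a5 a6 a7 a8 by simp
qed

lemma Pc_inv: assumes "Inv c1 c2" shows "Inv (Pc c1) (Pc c2)"
proof -
  obtain x1 y1 z where c1: "c1 = (x1, y1, z)" by (cases c1) auto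
  obtain x2 y2 z2 where c2: "c2 = (x2, y2, z2)" by (cases c2) auto
  from assms have h: "z2 = z" "0 < z" "z \<le> 1" "0 < x1" "x1 < x2" "x2 \<le> 1" "0 < y1" "y1 \<le> y2" "y2 \<le> z"
    by (auto simp: Inv_def c1 c2)
  have a1: "0 < z^3" using h by simp
  have a2: "z^3 \<le> 1" using h by (simp add: power_le_one)
  have x1sq: "x1^2 < 1" using h power_strict_mono[of x1 1 2] by simp
  have a3: "0 < x1*(3-x1^2)/2" using h x1sq by simp
  have "x1^2 + x1*x2 + x2^2 < 3"
  proof -
    have "x1*x2 \<le> 1" using h by (intro mult_le_one) auto
    moreover have "x2^2 \<le> 1" using h by (simp add: power_le_one)
    ultimately show ?thesis using x1sq by linarith
  qed
  then have "0 < (x2-x1)*(3 - x1^2 - x1*x2 - x2^2)" using h by simp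
  moreover have "(x2-x1)*(3 - x1^2 - x1*x2 - x2^2) = x2*(3-x2^2) - x1*(3-x1^2)"
    by (simp add: power2_eq_square algebra_simps)
  ultimately have a4: "x1*(3-x1^2)/2 < x2*(3-x2^2)/2" by simp
  have "0 \<le> (1-x2)^2*(2+x2)" using h by simp
  moreover have "(1-x2)^2*(2+x2) = 2 - x2*(3-x2^2)" by (simp add: power2_eq_square algebra_simps)
  ultimately have a5: "x2*(3-x2^2)/2 \<le> 1" by simp
  have y1z: "y1^2 \<le> z^2" "y2^2 \<le> z^2" using h by (simp_all add: power_mono)
  have "0 < z^2" using h by simp
  then have "0 < 3*z^2-y1^2" using y1z by linarith
  then have a6: "0 < y1*(3*z^2-y1^2)/2" using h by simp
  have "y1*y2 \<le> z*z" using h by (intro mult_mono) auto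
  then have "0 \<le> (y2-y1)*(3*z^2 - y1^2 - y1*y2 - y2^2)" using h y1z
    by (intro mult_nonneg_nonneg) (auto simp: power2_eq_square)
  moreover have "(y2-y1)*(3*z^2 - y1^2 - y1*y2 - y2^2) = y2*(3*z^2-y2^2) - y1*(3*z^2-y1^2)"
    by (simp add: power2_eq_square algebra_simps)
  ultimately have a7: "y1*(3*z^2-y1^2)/2 \<le> y2*(3*z^2-y2^2)/2" by simp
  have "0 \<le> (z-y2)^2*(2*z+y2)" using h by simp
  moreover have "(z-y2)^2*(2*z+y2) = 2*z^3 - y2*(3*z^2-y2^2)" by (simp add: power2_eq_square power3_eq_cube algebra_simps)
  ultimately have a8: "y2*(3*z^2-y2^2)/2 \<le> z^3" by simp
  show ?thesis unfolding c1 c2 h(1) Inv_def Pc_def prod.case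
    using a1 a2 a3 a4 a5 a6 a7 a8 by simp
qed

lemma fold_inv: "Inv c1 c2 \<Longrightarrow> Inv (fold apply_c ss c1) (fold apply_c ss c2)"
proof (induction ss arbitrary: c1 c2)
  case Nil then show ?case by simp
next
  case (Cons s ss)
  have "Inv (apply_c s c1) (apply_c s c2)"
    using Cons.prems by (cases s) (simp_all add: apply_c_def Bc_inv Pc_inv)
  then show ?case using Cons.IH by simp
qed

lemma H2_deriv: assumes "0 < t" "t < 1" shows "(H2 has_real_derivative (ln (1-t) - ln t)/ln 2) (at t)"
proof -
  have e: "H2 = (\<lambda>p. - p * (ln p / ln 2) - (1 - p) * (ln (1-p) / ln 2))"
    by (rule ext) (simp add: H2_def log_def)
  show ?thesis unfolding e using assms
    apply (auto intro!: derivative_eq_intros)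
    apply (simp add: algebra_simps diff_divide_distrib add_divide_distrib)
    done
qed

lemma H2_pos: assumes "0 < q" "q < 1" shows "0 < H2 q"
proof -
  have "log 2 q < 0" using assms by simp
  moreover have "log 2 (1-q) < 0" using assms by simp
  ultimately have "0 < - q * log 2 q" "0 < - (1-q) * log 2 (1-q)" using assms
    by (simp_all add: mult_pos_neg mult_neg_pos mult_neg_neg)
  then show ?thesis unfolding H2_def by (simp add: algebra_simps)
qed

lemma H2_mono: assumes "0 \<le> p" "p < q" "q < 1/2" shows "H2 p < H2 q"
proof (cases "p = 0")
  case True
  then show ?thesis using H2_pos[of q] assms by (simp add: H2_def)
next
  case False
  show ?thesis
  proof (rule DERIV_pos_imp_increasing[OF assms(2)])
    fix x assume x: "p \<le> x" "x \<le> q"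
    then have "0 < x" "x < 1" using assms False by auto
    moreover have "ln x < ln (1 - x)" using x assms False by simp
    ultimately show "\<exists>y. DERIV H2 x :> y \<and> 0 < y"
      using H2_deriv by (intro exI[of _ "(ln (1-x) - ln x)/ln 2"]) simp
  qed
qed

lemma init_inv:
  assumes "\<xi> \<ge> 1" "eb > 0" "0 \<le> a1" "a1 < a2" "a2 \<le> eb"
    "eb < (1+4*a1)/(2*(1+\<xi>))" "eb < 1/(2*\<xi>)"
  shows "Inv (Bc (cmap (eb-a1, a1, \<xi>*eb-a1))) (Bc (cmap (eb-a2, a2, \<xi>*eb-a2)))"
proof -
  define u where "u = \<xi>*eb"
  have ue: "eb \<le> u" unfolding u_def using assms by (simp add: mult_right_mono[of 1 \<xi> eb, simplified])
  have u1: "2*u < 1" unfolding u_def using assms(1,7) by (simp add: field_simps)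
  have ya: "0 < 1 - 2*eb - 2*u + 4*a1" unfolding u_def using assms(1,6) by (simp add: field_simps)
  define cx where "cx = 1 - 2*u"
  define cz where "cz = 1 - 2*eb"
  define y1 where "y1 = 1 - 2*eb - 2*u + 4*a1"
  define y2 where "y2 = 1 - 2*eb - 2*u + 4*a2"
  have c1: "cmap (eb-a1, a1, \<xi>*eb-a1) = (cx, y1, cz)"
    by (simp add: cmap_def cx_def y1_def cz_def u_def)
  have c2: "cmap (eb-a2, a2, \<xi>*eb-a2) = (cx, y2, cz)"
    by (simp add: cmap_def cx_def y2_def cz_def u_def)
  have h: "0 < cx" "cx \<le> 1" "0 < cz" "cz \<le> 1" "0 < y1" "y1 < y2"
    using ue u1 ya assms by (auto simp: cx_def cz_def y1_def y2_def)
  define D where "D = 1 + cz^2"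
  have Dp: "D > 0" unfolding D_def by (simp add: add_pos_nonneg)
  have a1: "0 < 2*cz/D" using Dp h by simp
  have "0 \<le> (1-cz)^2" by simp
  moreover have "(1-cz)^2 = D - 2*cz" unfolding D_def by (simp add: power2_eq_square algebra_simps)
  ultimately have "2*cz \<le> D" by linarith
  then have a2: "2*cz/D \<le> 1" using Dp by (simp add: divide_le_eq)
  have a3: "0 < (cx^2+y1^2)/D" using Dp h by (simp add: add_pos_pos)
  have "y1^2 < y2^2" using h by (simp add: power_strict_mono)
  then have a4: "(cx^2+y1^2)/D < (cx^2+y2^2)/D" using Dp by (simp add: divide_strict_right_mono)
  have iden: "1 + cz^2 - cx^2 - y2^2 = 8*((1-eb-u+a2)*(u-a2) + (eb-a2)*a2)"
    by (simp add: cx_def cz_def y2_def power2_eq_square algebra_simps)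
  have "0 \<le> (1-eb-u+a2)*(u-a2)" using ue u1 assms by (intro mult_nonneg_nonneg) auto
  moreover have "0 \<le> (eb-a2)*a2" using assms by (intro mult_nonneg_nonneg) auto
  ultimately have "0 \<le> 8*((1-eb-u+a2)*(u-a2) + (eb-a2)*a2)" by simp
  then have "0 \<le> 1 + cz^2 - cx^2 - y2^2" by (simp only: iden)
  then have "cx^2 + y2^2 \<le> 1 + cz^2" by simp
  then have a5: "(cx^2+y2^2)/D \<le> 1" using Dp unfolding D_def by simp
  have a6: "0 < 2*cx*y1/D" using Dp h by simp
  have "cx*y1 \<le> cx*y2" using h by simp
  then have a7: "2*cx*y1/D \<le> 2*cx*y2/D" using Dp by (simp add: divide_right_mono)
  have "y2 \<le> 1 + 2*eb - 2*u" using assms unfolding y2_def by simp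
  then have "cx*y2 \<le> cx*(1 + 2*eb - 2*u)" using h by (simp add: mult_left_mono)
  moreover have "cz - cx*(1 + 2*eb - 2*u) = (2-2*u)*(2*u-2*eb)"
    by (simp add: cx_def cz_def algebra_simps)
  moreover have "0 \<le> (2-2*u)*(2*u-2*eb)" using ue u1 by (intro mult_nonneg_nonneg) auto
  ultimately have "cx*y2 \<le> cz" by linarith
  then have a8: "2*cx*y2/D \<le> 2*cz/D" using Dp by (simp add: divide_right_mono)
  show ?thesis unfolding c1 c2 Inv_def Bc_def D_def[symmetric] prod.case
    using a1 a2 a3 a4 a5 a6 a7 a8 h by simp
qed

theorem theorem3:
  fixes \<xi> eb :: real and A :: "real set" and ss :: "step list"
  assumes "\<xi> \<ge> 1" and "eb > 0" and "A \<subseteq> {0..eb}"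
    and "ss \<noteq> []" and "hd ss = BStep"
    and "\<forall>a\<in>A. eb < (1 + 4 * a) / (2 * (1 + \<xi>))"
    and "eb < 1 / (2 * \<xi>)"
  shows "strict_mono_on A (key_rate \<xi> eb ss)"
proof (rule strict_mono_onI)
  fix r s assume r: "r \<in> A" and s: "s \<in> A" and rs: "r < s"
  obtain rest where ss: "ss = BStep # rest" using assms(4,5) by (cases ss) auto
  have "Inv (Bc (cmap (eb-r, r, \<xi>*eb-r))) (Bc (cmap (eb-s, s, \<xi>*eb-s)))"
    using r s rs assms by (intro init_inv) auto
  then have I: "Inv (fold apply_c ss (cmap (eb-r, r, \<xi>*eb-r))) (fold apply_c ss (cmap (eb-s, s, \<xi>*eb-s)))"
    unfolding ss by (simp add: apply_c_def fold_inv)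
  obtain x1 y1 z1 where f1: "fold apply_c ss (cmap (eb-r, r, \<xi>*eb-r)) = (x1, y1, z1)"
    by (cases "fold apply_c ss (cmap (eb-r, r, \<xi>*eb-r))") auto
  obtain x2 y2 z2 where f2: "fold apply_c ss (cmap (eb-s, s, \<xi>*eb-s)) = (x2, y2, z2)"
    by (cases "fold apply_c ss (cmap (eb-s, s, \<xi>*eb-s))") auto
  have h: "z1 = z2" "0 < x1" "x1 < x2" using I unfolding f1 f2 Inv_def by auto
  have "H2 ((1 - x2)/2) < H2 ((1 - x1)/2)"
    using h I unfolding f1 f2 Inv_def by (intro H2_mono) auto
  then show "key_rate \<xi> eb ss r < key_rate \<xi> eb ss s"
    unfolding key_rate_c f1 f2 using h by simp
qed

end
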